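(* Let $\mathbf{d}=(d_1,\dots,d_n)$ be nonnegative reals with $\sum_u d_u>0$, let $(m_k)_{k_{\min}\le k\le k_{\max}}$ be nonnegative integers (with $k_{\min}\ge 2$) satisfying $\sum_k k\,m_k=\sum_{u\in[n]}d_u$, and let $q\in[0,1]$. Let $G$ be the random multi-hypergraph generated by the simplicial Chung–Lu model with inputs $\mathbf{d}$, $(m_k)_k$ and $q$. Then for every $v\in[n]$, $\mathbb{E}[\deg_G(v)]=d_v$.
   Context: Degree in a multi-hypergraph: $\deg_G(v)=\sum_{e\in E(G)}m(v,e)$, where $m(v,e)$ is the multiplicity of $v$ in the (multiset) edge $e$. Let $p(v)=d_v/\sum_{u}d_u$. A Chung–Lu edge of size $k$ is the multiset $\{x_1,\dots,x_k\}$ with $x_1,\dots,x_k$ i.i.d. of law $p$. Simplicial edge of size $k$ given a current list $E$ of edges (with $E_k$ the sublist of edges of size $k$): if $E\setminus E_k$ is empty, return a fresh Chung–Lu edge of size $k$. Otherwise choose $e'$ uniformly at random from the list $E\setminus E_k$; if $|e'|<k$, return the multiset union of $e'$ with a fresh Chung–Lu edge of size $k-|e'|$; if $|e'|>k$, return a uniformly random choice of $k$ of the $|e'|$ entries of $e'$. Simplicial Chung–Lu model: let $S$ be a uniformly random ordering of the multiset of sizes containing $m_k$ copies of $k$ for each $k$. Start with $E$ empty. For each $k$ in $S$ in order, draw an independent $X\sim\mathrm{Bernoulli}(q)$; if $X=1$ generate a simplicial edge of size $k$ given the current $E$, otherwise generate a fresh Chung–Lu edge of size $k$; append it to $E$.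 Output $G=([n],E)$. All random choices are independent except as specified. *)

theory Defs
  imports "HOL-Probability.Probability" "HOL-Combinatorics.Multiset_Permutations"
begin

text \<open>Vertices are the naturals 1..n; an edge is a multiset of vertices.
  The degree vector d is a function nat => real (only the values on 1..n matter).\<close>

type_synonym edge = "nat multiset"

definition vertex_law :: "nat \<Rightarrow> (nat \<Rightarrow> real) \<Rightarrow> nat pmf" where
  "vertex_law n d = embed_pmf (\<lambda>v. if v \<in> {1..n} then d v / (\<Sum>u\<in>{1..n}. d u) else 0)"

fun cl_edge :: "nat pmf \<Rightarrow> nat \<Rightarrow> edge pmf" where
  "cl_edge P 0 = return_pmf {#}"
| "cl_edge P (Suc k) = do { x \<leftarrow> P; e \<leftarrow> cl_edge P k; return_pmf (add_mset x e) }"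

definition sub_choice :: "nat \<Rightarrow> edge \<Rightarrow> edge pmf" where
  "sub_choice k e = (let xs = sorted_list_of_multiset e in
     map_pmf (\<lambda>S. mset (nths xs S)) (pmf_of_set {S. S \<subseteq> {..<length xs} \<and> card S = k}))"

definition simplicial_edge :: "nat pmf \<Rightarrow> nat \<Rightarrow> edge list \<Rightarrow> edge pmf" where
  "simplicial_edge P k E = (let others = filter (\<lambda>e. size e \<noteq> k) E in
     if others = [] then cl_edge P k
     else do {
       i \<leftarrow> pmf_of_set {..<length others};
       let e' = others ! i;
       if size e' < k then map_pmf (\<lambda>f. e' + f) (cl_edge P (k - size e'))
       else sub_choice k e' })"

definition model_step :: "nat pmf \<Rightarrow> real \<Rightarrow> nat \<Rightarrow> edge list \<Rightarrow> edge list pmf" where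
  "model_step P q k E = do {
     X \<leftarrow> bernoulli_pmf q;
     e \<leftarrow> (if X then simplicial_edge P k E else cl_edge P k);
     return_pmf (E @ [e]) }"

fun model_run :: "nat pmf \<Rightarrow> real \<Rightarrow> nat list \<Rightarrow> edge list \<Rightarrow> edge list pmf" where
  "model_run P q [] E = return_pmf E"
| "model_run P q (k # ks) E = model_step P q k E \<bind> model_run P q ks"

definition size_multiset :: "nat \<Rightarrow> nat \<Rightarrow> (nat \<Rightarrow> nat) \<Rightarrow> nat multiset" where
  "size_multiset kmin kmax m = (\<Sum>k\<in>{kmin..kmax}. replicate_mset (m k) k)"

definition simplicial_CL :: "nat \<Rightarrow> (nat \<Rightarrow> real) \<Rightarrow> nat \<Rightarrow> nat \<Rightarrow> (nat \<Rightarrow> nat) \<Rightarrow> real \<Rightarrow> edge list pmf" where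
  "simplicial_CL n d kmin kmax m q = do {
     S \<leftarrow> pmf_of_set (permutations_of_multiset (size_multiset kmin kmax m));
     model_run (vertex_law n d) q S [] }"

definition hdeg :: "edge list \<Rightarrow> nat \<Rightarrow> nat" where
  "hdeg E v = (\<Sum>e\<leftarrow>E. count e v)"

end

theory Submission
  imports Defs
begin


lemma exp_bind:
  fixes h :: "'b \<Rightarrow> real"
  assumes "finite (set_pmf p)" "\<And>x. x \<in> set_pmf p \<Longrightarrow> finite (set_pmf (f x))"
  shows "measure_pmf.expectation (p \<bind> f) h = measure_pmf.expectation p (\<lambda>x. measure_pmf.expectation (f x) h)"
  using assms by (subst pmf_expectation_bind[of "set_pmf p"]) (auto simp: integral_measure_pmf[of "set_pmf p"])

lemma exp_cong:
  fixes f g :: "'a \<Rightarrow> real"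
  assumes "\<And>x. x \<in> set_pmf M \<Longrightarrow> f x = g x"
  shows "measure_pmf.expectation M f = measure_pmf.expectation M g"
  by (rule integral_cong_AE) (auto simp: AE_measure_pmf_iff assms)

lemma cl_edge_props:
  assumes "finite (set_pmf P)"
  shows "finite (set_pmf (cl_edge P k)) \<and> (\<forall>e\<in>set_pmf (cl_edge P k). size e = k)"
  by (induction k) (auto simp: assms)

lemma cl_edge_exp:
  assumes "finite (set_pmf P)"
  shows "measure_pmf.expectation (cl_edge P k) (\<lambda>e. real (count e v)) = real k * pmf P v"
proof (induction k)
  case 0
  then show ?case by simp
next
  case (Suc k)
  have fin: "finite (set_pmf (cl_edge P k))" using cl_edge_props[OF assms] by blast
  have "measure_pmf.expectation (cl_edge P (Suc k)) (\<lambda>e. real (count e v))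
     = measure_pmf.expectation P (\<lambda>x. measure_pmf.expectation (cl_edge P k)
          (\<lambda>e. (if x = v then 1 else 0) + real (count e v)))"
    apply (simp add: exp_bind assms fin)
    apply (rule arg_cong[where f="measure_pmf.expectation P"])
    apply (rule ext)
    apply (rule arg_cong[where f="measure_pmf.expectation (cl_edge P k)"])
    by auto
  also have "\<dots> = measure_pmf.expectation P (\<lambda>x. (if x = v then 1 else 0) + real k * pmf P v)"
    using fin by (simp add: Bochner_Integration.integral_add integrable_measure_pmf_finite Suc)
  also have "\<dots> = measure_pmf.expectation P (\<lambda>x. (if x = v then 1 else 0)) + real k * pmf P v"
    using assms by (simp add: Bochner_Integration.integral_add integrable_measure_pmf_finite)
  also have "measure_pmf.expectation P (\<lambda>x. (if x = v then 1 else 0)) = pmf P v"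
    using assms by (subst integral_measure_pmf[of "{v}"]) (auto split: if_splits)
  finally show ?case by (simp add: algebra_simps)
qed

lemma count_nths: "count (mset (nths xs S)) v = card {i. i < length xs \<and> i \<in> S \<and> xs!i = v}"
proof (induction xs rule: rev_induct)
  case Nil
  then show ?case by simp
next
  case (snoc x xs)
  have eq: "{i. i < length (xs @ [x]) \<and> i \<in> S \<and> (xs @ [x])!i = v}
      = {i. i < length xs \<and> i \<in> S \<and> xs!i = v} \<union> (if length xs \<in> S \<and> x = v then {length xs} else {})"
    by (auto simp: nth_append less_Suc_eq)
  have c1: "count (mset (nths (xs@[x]) S)) v = count (mset (nths xs S)) v + (if length xs \<in> S \<and> x = v then 1 else 0)"
    by (auto simp: nths_append)
  have c2: "card {i. i < length (xs @ [x]) \<and> i \<in> S \<and> (xs @ [x])!i = v}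
     = card {i. i < length xs \<and> i \<in> S \<and> xs!i = v} + (if length xs \<in> S \<and> x = v then 1 else 0)"
    unfolding eq by (cases "length xs \<in> S \<and> x = v") auto
  show ?case using c1 c2 snoc by simp
qed

lemma card_contain:
  assumes "i < L" "1 \<le> k"
  shows "card {S. S \<subseteq> {..<L} \<and> card S = k \<and> i \<in> S} = (L - 1) choose (k - 1)"
proof -
  let ?T = "{T. T \<subseteq> {..<L} - {i} \<and> card T = k - 1}"
  have "{S. S \<subseteq> {..<L} \<and> card S = k \<and> i \<in> S} = insert i ` ?T"
  proof (intro equalityI subsetI)
    fix S assume S: "S \<in> {S. S \<subseteq> {..<L} \<and> card S = k \<and> i \<in> S}"
    then have "finite S" using finite_subset[of S "{..<L}"] by auto
    then have "S - {i} \<in> ?T" "S = insert i (S - {i})" using S by auto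
    then show "S \<in> insert i ` ?T" by blast
  next
    fix S assume "S \<in> insert i ` ?T"
    then obtain T where T: "T \<in> ?T" "S = insert i T" by blast
    then have "finite T" using finite_subset[of T "{..<L}"] by auto
    moreover have "i \<notin> T" using T by auto
    ultimately show "S \<in> {S. S \<subseteq> {..<L} \<and> card S = k \<and> i \<in> S}"
      using T assms by auto
  qed
  moreover have "inj_on (insert i) ?T"
  proof (rule inj_onI)
    fix A B assume AB: "A \<in> ?T" "B \<in> ?T" "insert i A = insert i B"
    then have "i \<notin> A" "i \<notin> B" by auto
    then show "A = B" using AB(3) by (metis Diff_insert_absorb)
  qed
  ultimately have "card {S. S \<subseteq> {..<L} \<and> card S = k \<and> i \<in> S} = card ?T"
    by (simp add: card_image)
  also have "\<dots> = card ({..<L} - {i}) choose (k - 1)" by (rule n_subsets) simp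
  finally show ?thesis using assms by simp
qed

lemma sub_choice_props:
  assumes "k \<le> size e"
  shows "finite (set_pmf (sub_choice k e)) \<and> (\<forall>f\<in>set_pmf (sub_choice k e). size f = k)"
proof -
  let ?xs = "sorted_list_of_multiset e"
  let ?F = "{S. S \<subseteq> {..<length ?xs} \<and> card S = k}"
  have len: "length ?xs = size e"
    by (metis mset_sorted_list_of_multiset size_mset)
  have finF: "finite ?F" by (rule finite_subset[of _ "Pow {..<length ?xs}"]) auto
  have "card ?F = length ?xs choose k" using n_subsets[of "{..<length ?xs}" k] by simp
  then have "?F \<noteq> {}" using assms len by (metis binomial_eq_0_iff card.empty not_le)
  moreover have "\<And>S. S \<in> ?F \<Longrightarrow> length (nths ?xs S) = k"
  proof -
    fix S assume "S \<in> ?F"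
    then have "{i. i < length ?xs \<and> i \<in> S} = S" by auto
    then show "length (nths ?xs S) = k" using \<open>S \<in> ?F\<close> by (simp add: length_nths)
  qed
  ultimately show ?thesis using finF
    by (auto simp: sub_choice_def Let_def)
qed

lemma sub_choice_exp:
  assumes "k \<le> size e" "0 < size e"
  shows "measure_pmf.expectation (sub_choice k e) (\<lambda>f. real (count f v)) = real k / real (size e) * real (count e v)"
proof -
  define xs where "xs = sorted_list_of_multiset e"
  define L where "L = length xs"
  define F where "F = {S. S \<subseteq> {..<L} \<and> card S = k}"
  define V where "V = {i. i < L \<and> xs!i = v}"
  have len: "L = size e" unfolding L_def xs_def
    by (metis mset_sorted_list_of_multiset size_mset)
  have finF: "finite F" unfolding F_def by (rule finite_subset[of _ "Pow {..<L}"]) auto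
  have cardF: "card F = L choose k" unfolding F_def using n_subsets[of "{..<L}" k] by simp
  then have Fne: "F \<noteq> {}" using assms len by (metis binomial_eq_0_iff card.empty not_le)
  have cV: "count e v = card V"
  proof -
    have "count e v = count (mset (nths xs {..<L})) v"
      by (simp add: L_def xs_def)
    also have "\<dots> = card V" by (subst count_nths) (simp add: V_def L_def)
    finally show ?thesis .
  qed
  have "measure_pmf.expectation (sub_choice k e) (\<lambda>f. real (count f v))
      = measure_pmf.expectation (pmf_of_set F) (\<lambda>S. real (card {i. i < L \<and> i \<in> S \<and> xs!i = v}))"
    by (simp add: sub_choice_def xs_def[symmetric] L_def[symmetric] F_def[symmetric] count_nths)
  also have "\<dots> = (\<Sum>S\<in>F. real (card {i. i < L \<and> i \<in> S \<and> xs!i = v})) / card F"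
    by (rule integral_pmf_of_set[OF Fne finF])
  also have "(\<Sum>S\<in>F. real (card {i. i < L \<and> i \<in> S \<and> xs!i = v}))
      = (\<Sum>S\<in>F. \<Sum>i\<in>V. if i \<in> S then 1 else 0)"
  proof (rule sum.cong[OF refl])
    fix S assume "S \<in> F"
    have "{i. i < L \<and> i \<in> S \<and> xs!i = v} = V \<inter> S" by (auto simp: V_def)
    moreover have "finite V" by (simp add: V_def)
    ultimately show "real (card {i. i < L \<and> i \<in> S \<and> xs!i = v}) = (\<Sum>i\<in>V. if i \<in> S then 1 else 0)"
      by (simp add: sum.If_cases)
  qed
  also have "\<dots> = (\<Sum>i\<in>V. \<Sum>S\<in>F. if i \<in> S then 1 else 0)" by (rule sum.swap)
  also have "\<dots> = (\<Sum>i\<in>V. real (if k = 0 then 0 else (L - 1) choose (k - 1)))"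
  proof (rule sum.cong[OF refl])
    fix i assume "i \<in> V"
    then have iL: "i < L" by (simp add: V_def)
    have "(\<Sum>S\<in>F. if i \<in> S then 1 else 0) = real (card {S\<in>F. i \<in> S})"
      using finF by (simp add: sum.If_cases Int_def conj_commute)
    also have "{S\<in>F. i \<in> S} = {S. S \<subseteq> {..<L} \<and> card S = k \<and> i \<in> S}" by (auto simp: F_def)
    also have "real (card \<dots>) = real (if k = 0 then 0 else (L - 1) choose (k - 1))"
    proof (cases "k = 0")
      case True
      have "{S. S \<subseteq> {..<L} \<and> card S = k \<and> i \<in> S} = {}"
        using True by (auto dest: finite_subset)
      then show ?thesis using True by simp
    next
      case False
      then show ?thesis using card_contain[OF iL] by simp
    qed
    finally show "(\<Sum>S\<in>F. if i \<in> S then 1 else 0) = real (if k = 0 then 0 else (L - 1) choose (k - 1))" .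
  qed
  also have "\<dots> = real (card V) * real (if k = 0 then 0 else (L - 1) choose (k - 1))" by simp
  finally have E: "measure_pmf.expectation (sub_choice k e) (\<lambda>f. real (count f v))
     = real (card V) * real (if k = 0 then 0 else (L - 1) choose (k - 1)) / real (L choose k)"
    by (simp add: cardF)
  show ?thesis
  proof (cases "k = 0")
    case True then show ?thesis using E by simp
  next
    case False
    obtain n' where n': "L = Suc n'" using assms len by (metis gr0_implies_Suc)
    obtain j where j: "k = Suc j" using False by (metis not0_implies_Suc)
    have "real L * real ((L - 1) choose (k - 1)) = real (L choose k) * real k"
      using Suc_times_binomial_eq[of n' j] n' j by (metis diff_Suc_1 of_nat_mult)
    moreover have "real (L choose k) > 0" using assms len by simp
    moreover have "real L > 0" using assms len by simp
    ultimately have r: "real ((L - 1) choose (k - 1)) / real (L choose k) = real k / real L"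
      by (simp add: frac_eq_eq algebra_simps)
    have "measure_pmf.expectation (sub_choice k e) (\<lambda>f. real (count f v))
        = real (card V) * (real ((L - 1) choose (k - 1)) / real (L choose k))"
      using E False by simp
    also have "\<dots> = real k / real (size e) * real (count e v)"
      unfolding r using cV len by simp
    finally show ?thesis .
  qed
qed



definition H :: "nat pmf \<Rightarrow> nat \<Rightarrow> nat \<Rightarrow> edge \<Rightarrow> real" where
  "H P v k e = (if size e < k then real (count e v) + real (k - size e) * pmf P v
                else real k / real (size e) * real (count e v))"

definition branch :: "nat pmf \<Rightarrow> nat \<Rightarrow> edge \<Rightarrow> edge pmf" where
  "branch P k e = (if size e < k then map_pmf (\<lambda>f. e + f) (cl_edge P (k - size e)) else sub_choice k e)"

lemma branch_props:
  assumes "finite (set_pmf P)" "size e \<noteq> k"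
  shows "finite (set_pmf (branch P k e)) \<and> (\<forall>f\<in>set_pmf (branch P k e). size f = k)
     \<and> measure_pmf.expectation (branch P k e) (\<lambda>f. real (count f v)) = H P v k e"
proof (cases "size e < k")
  case True
  have fin: "finite (set_pmf (cl_edge P (k - size e)))" using cl_edge_props[OF assms(1)] by blast
  have "measure_pmf.expectation (cl_edge P (k - size e)) (\<lambda>f. real (count e v) + real (count f v))
     = real (count e v) + real (k - size e) * pmf P v"
    using fin cl_edge_exp[OF assms(1)]
    by (simp add: Bochner_Integration.integral_add integrable_measure_pmf_finite)
  then have "measure_pmf.expectation (branch P k e) (\<lambda>f. real (count f v)) = H P v k e"
    using True by (simp add: branch_def H_def)
  moreover have "finite (set_pmf (branch P k e))" using True fin by (simp add: branch_def)
  moreover have "\<forall>f\<in>set_pmf (branch P k e). size f = k"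
  proof
    fix f assume "f \<in> set_pmf (branch P k e)"
    then obtain g where g: "g \<in> set_pmf (cl_edge P (k - size e))" "f = e + g"
      using True by (auto simp: branch_def)
    have "size g = k - size e" using cl_edge_props[OF assms(1), of "k - size e"] g(1) by blast
    then show "size f = k" using g(2) True by simp
  qed
  ultimately show ?thesis by blast
next
  case False
  then have le: "k \<le> size e" "0 < size e" using assms(2) by auto
  have "measure_pmf.expectation (branch P k e) (\<lambda>f. real (count f v)) = H P v k e"
    using False sub_choice_exp[OF le] by (simp add: branch_def H_def)
  moreover have "finite (set_pmf (branch P k e)) \<and> (\<forall>f\<in>set_pmf (branch P k e). size f = k)"
    using False sub_choice_props[OF le(1)] by (simp add: branch_def)
  ultimately show ?thesis by blast
qed

lemma simplicial_edge_eq: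
  "simplicial_edge P k E = (let others = filter (\<lambda>e. size e \<noteq> k) E in
     if others = [] then cl_edge P k
     else pmf_of_set {..<length others} \<bind> (\<lambda>i. branch P k (others ! i)))"
  by (simp add: simplicial_edge_def branch_def Let_def)

lemma simplicial_edge_props:
  assumes "finite (set_pmf P)"
  shows "finite (set_pmf (simplicial_edge P k E)) \<and> (\<forall>f\<in>set_pmf (simplicial_edge P k E). size f = k)"
proof (cases "filter (\<lambda>e. size e \<noteq> k) E = []")
  case True
  then show ?thesis using cl_edge_props[OF assms] by (simp add: simplicial_edge_eq)
next
  case False
  let ?o = "filter (\<lambda>e. size e \<noteq> k) E"
  have o: "\<And>i. i < length ?o \<Longrightarrow> size (?o ! i) \<noteq> k"
  proof -
    fix i assume "i < length ?o"
    then have "?o ! i \<in> set ?o" by (rule nth_mem)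
    then show "size (?o ! i) \<noteq> k" by simp
  qed
  have ne: "{..<length ?o} \<noteq> {}" using False by auto
  have eq: "set_pmf (simplicial_edge P k E) = (\<Union>i<length ?o. set_pmf (branch P k (?o ! i)))"
    using False by (simp add: simplicial_edge_eq Let_def set_pmf_of_set[OF ne])
  have "finite (\<Union>i<length ?o. set_pmf (branch P k (?o ! i)))"
    using branch_props[OF assms o] by blast
  moreover have "\<forall>f\<in>(\<Union>i<length ?o. set_pmf (branch P k (?o ! i))). size f = k"
    using branch_props[OF assms o] by blast
  ultimately show ?thesis unfolding eq by blast
qed

lemma sum_list_filter: "sum_list (map f (filter P xs)) = sum_list (map (\<lambda>x. if P x then f x else 0) xs)"
  by (induction xs) auto

lemma sum_list_nth': "sum_list (map f xs) = (\<Sum>i<length xs. f (xs ! i))"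
  by (simp add: sum_list_sum_nth atLeast0LessThan)

lemma simplicial_edge_exp:
  assumes "finite (set_pmf P)"
  shows "measure_pmf.expectation (simplicial_edge P k E) (\<lambda>f. real (count f v)) =
    (if filter (\<lambda>e. size e \<noteq> k) E = [] then real k * pmf P v
     else (\<Sum>i<length E. if size (E!i) \<noteq> k then H P v k (E!i) else 0) / real (length (filter (\<lambda>e. size e \<noteq> k) E)))"
proof (cases "filter (\<lambda>e. size e \<noteq> k) E = []")
  case True
  then show ?thesis using cl_edge_exp[OF assms] by (simp add: simplicial_edge_eq)
next
  case False
  let ?o = "filter (\<lambda>e. size e \<noteq> k) E"
  have o: "\<And>i. i < length ?o \<Longrightarrow> size (?o ! i) \<noteq> k"
  proof -
    fix i assume "i < length ?o"
    then have "?o ! i \<in> set ?o" by (rule nth_mem)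
    then show "size (?o ! i) \<noteq> k" by simp
  qed
  have ne: "{..<length ?o} \<noteq> {}" using False by auto
  have se: "simplicial_edge P k E = pmf_of_set {..<length ?o} \<bind> (\<lambda>i. branch P k (?o ! i))"
    using False by (simp add: simplicial_edge_eq Let_def)
  have "measure_pmf.expectation (simplicial_edge P k E) (\<lambda>f. real (count f v))
      = (\<Sum>i\<in>{..<length ?o}. measure_pmf.expectation (branch P k (?o ! i)) (\<lambda>f. real (count f v)) /\<^sub>R real (card {..<length ?o}))"
    unfolding se
  proof (rule pmf_expectation_bind_pmf_of_set[OF ne])
    fix i assume "i \<in> {..<length ?o}"
    then show "finite (set_pmf (branch P k (?o ! i)))" using branch_props[OF assms o] by blast
  qed simp
  also have "\<dots> = (\<Sum>i<length ?o. H P v k (?o ! i) / real (length ?o))"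
  proof (rule sum.cong[OF refl])
    fix i assume "i \<in> {..<length ?o}"
    then have "measure_pmf.expectation (branch P k (?o ! i)) (\<lambda>f. real (count f v)) = H P v k (?o ! i)"
      using branch_props[OF assms o] by blast
    then show "measure_pmf.expectation (branch P k (?o ! i)) (\<lambda>f. real (count f v)) /\<^sub>R real (card {..<length ?o})
        = H P v k (?o ! i) / real (length ?o)"
      by (simp add: divide_inverse mult.commute)
  qed
  also have "\<dots> = (\<Sum>i<length ?o. H P v k (?o ! i)) / real (length ?o)"
    by (simp add: sum_divide_distrib)
  also have "(\<Sum>i<length ?o. H P v k (?o ! i)) = sum_list (map (H P v k) ?o)"
    by (simp add: sum_list_nth')
  also have "\<dots> = (\<Sum>i<length E. if size (E!i) \<noteq> k then H P v k (E!i) else 0)"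
    by (subst sum_list_filter) (simp only: sum_list_nth' length_map nth_map)
  finally show ?thesis using False by simp
qed



lemma model_step_props:
  assumes "finite (set_pmf P)"
  shows "finite (set_pmf (model_step P q k E)) \<and>
    (\<forall>E'\<in>set_pmf (model_step P q k E). \<exists>e. E' = E @ [e] \<and> size e = k)"
proof -
  have "set_pmf (model_step P q k E) \<subseteq> (\<lambda>e. E @ [e]) ` (set_pmf (simplicial_edge P k E) \<union> set_pmf (cl_edge P k))"
    by (auto simp: model_step_def split: if_splits)
  moreover have "finite (set_pmf (simplicial_edge P k E) \<union> set_pmf (cl_edge P k))"
    using simplicial_edge_props[OF assms] cl_edge_props[OF assms] by blast
  moreover have "\<forall>e\<in>set_pmf (simplicial_edge P k E) \<union> set_pmf (cl_edge P k). size e = k"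
    using simplicial_edge_props[OF assms] cl_edge_props[OF assms] by blast
  ultimately show ?thesis by (meson finite_imageI finite_subset image_iff subsetD)
qed

lemma model_step_exp_old:
  assumes "finite (set_pmf P)" "i < length E"
  shows "measure_pmf.expectation (model_step P q k E) (\<lambda>E'. real (count (E' ! i) v)) = real (count (E ! i) v)"
proof -
  have "measure_pmf.expectation (model_step P q k E) (\<lambda>E'. real (count (E' ! i) v))
     = measure_pmf.expectation (model_step P q k E) (\<lambda>E'. real (count (E ! i) v))"
  proof (rule exp_cong)
    fix E' assume "E' \<in> set_pmf (model_step P q k E)"
    then obtain e where "E' = E @ [e]" using model_step_props[OF assms(1)] by blast
    then show "real (count (E' ! i) v) = real (count (E ! i) v)" using assms(2) by (simp add: nth_append)
  qed
  then show ?thesis by simp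
qed

lemma model_step_exp_new:
  assumes "finite (set_pmf P)" "0 \<le> q" "q \<le> 1"
  shows "measure_pmf.expectation (model_step P q k E) (\<lambda>E'. real (count (E' ! length E) v))
     = q * measure_pmf.expectation (simplicial_edge P k E) (\<lambda>f. real (count f v)) + (1 - q) * (real k * pmf P v)"
proof -
  have f1: "finite (set_pmf (simplicial_edge P k E))" using simplicial_edge_props[OF assms(1)] by blast
  have f2: "finite (set_pmf (cl_edge P k))" using cl_edge_props[OF assms(1)] by blast
  have fb: "finite (set_pmf (bernoulli_pmf q))" by (rule finite_subset[of _ UNIV]) auto
  have "measure_pmf.expectation (model_step P q k E) (\<lambda>E'. real (count (E' ! length E) v))
     = measure_pmf.expectation (bernoulli_pmf q) (\<lambda>X. measure_pmf.expectation
          ((if X then simplicial_edge P k E else cl_edge P k) \<bind> (\<lambda>e. return_pmf (E @ [e])))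
          (\<lambda>E'. real (count (E' ! length E) v)))"
    unfolding model_step_def
    by (rule exp_bind[OF fb]) (use f1 f2 in auto)
  also have "\<dots> = measure_pmf.expectation (bernoulli_pmf q) (\<lambda>X. measure_pmf.expectation
          (if X then simplicial_edge P k E else cl_edge P k) (\<lambda>f. real (count f v)))"
    using f1 f2 by (simp add: exp_bind)
  also have "\<dots> = q * measure_pmf.expectation (simplicial_edge P k E) (\<lambda>f. real (count f v)) + (1 - q) * (real k * pmf P v)"
    using assms cl_edge_exp[OF assms(1)] by (simp add: algebra_simps)
  finally show ?thesis .
qed



definition Inv :: "nat pmf \<Rightarrow> nat \<Rightarrow> edge list pmf \<Rightarrow> nat list \<Rightarrow> bool" where
  "Inv P v M ks \<longleftrightarrow> finite (set_pmf M) \<and> (\<forall>E\<in>set_pmf M. map size E = ks) \<and>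
     (\<forall>i<length ks. measure_pmf.expectation M (\<lambda>E. real (count (E!i) v)) = real (ks!i) * pmf P v)"

lemma H_exp:
  assumes fM: "finite (set_pmf M)" and sz: "\<And>E. E \<in> set_pmf M \<Longrightarrow> size (E!j) = s"
    and ex: "measure_pmf.expectation M (\<lambda>E. real (count (E!j) v)) = real s * pmf P v"
    and ne: "s \<noteq> k"
  shows "measure_pmf.expectation M (\<lambda>E. H P v k (E!j)) = real k * pmf P v"
proof -
  have "measure_pmf.expectation M (\<lambda>E. H P v k (E!j))
     = measure_pmf.expectation M (\<lambda>E. if s < k then real (count (E!j) v) + real (k - s) * pmf P v
          else real k / real s * real (count (E!j) v))"
    by (rule exp_cong) (simp add: H_def sz)
  also have "\<dots> = real k * pmf P v"
  proof (cases "s < k")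
    case True
    then show ?thesis using fM ex by (simp add: integrable_measure_pmf_finite of_nat_diff algebra_simps)
  next
    case False
    then have "s > 0" using ne by simp
    then show ?thesis using fM ex False ne by simp
  qed
  finally show ?thesis .
qed

lemma Inv_step:
  assumes P: "finite (set_pmf P)" and q: "0 \<le> q" "q \<le> 1" and I: "Inv P v M ks"
  shows "Inv P v (M \<bind> model_step P q k) (ks @ [k])"
proof -
  have fM: "finite (set_pmf M)" and sz: "\<And>E. E \<in> set_pmf M \<Longrightarrow> map size E = ks"
    and ex: "\<And>i. i < length ks \<Longrightarrow> measure_pmf.expectation M (\<lambda>E. real (count (E!i) v)) = real (ks!i) * pmf P v"
    using I unfolding Inv_def by auto
  have fs: "\<And>E. finite (set_pmf (model_step P q k E))" using model_step_props[OF P] by blast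
  have fin: "finite (set_pmf (M \<bind> model_step P q k))"
    using fM fs by (simp add: set_bind_pmf)
  have sz': "\<forall>E'\<in>set_pmf (M \<bind> model_step P q k). map size E' = ks @ [k]"
  proof
    fix E' assume "E' \<in> set_pmf (M \<bind> model_step P q k)"
    then obtain E where E: "E \<in> set_pmf M" "E' \<in> set_pmf (model_step P q k E)" by (auto simp: set_bind_pmf)
    then obtain e where "E' = E @ [e]" "size e = k" using model_step_props[OF P] by blast
    then show "map size E' = ks @ [k]" using sz[OF E(1)] by simp
  qed
  have len: "\<And>E. E \<in> set_pmf M \<Longrightarrow> length E = length ks" using sz by (metis length_map)
  have exps: "\<forall>i<length (ks @ [k]). measure_pmf.expectation (M \<bind> model_step P q k) (\<lambda>E. real (count (E!i) v))
      = real ((ks @ [k])!i) * pmf P v"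
  proof (intro allI impI)
    fix i assume i: "i < length (ks @ [k])"
    have b: "measure_pmf.expectation (M \<bind> model_step P q k) (\<lambda>E. real (count (E!i) v))
      = measure_pmf.expectation M (\<lambda>E. measure_pmf.expectation (model_step P q k E) (\<lambda>E'. real (count (E'!i) v)))"
      by (rule exp_bind[OF fM fs])
    show "measure_pmf.expectation (M \<bind> model_step P q k) (\<lambda>E. real (count (E!i) v))
      = real ((ks @ [k])!i) * pmf P v"
    proof (cases "i < length ks")
      case True
      have "measure_pmf.expectation M (\<lambda>E. measure_pmf.expectation (model_step P q k E) (\<lambda>E'. real (count (E'!i) v)))
         = measure_pmf.expectation M (\<lambda>E. real (count (E!i) v))"
        by (rule exp_cong) (use model_step_exp_old[OF P] len True in auto)
      then show ?thesis using b ex[OF True] True by (simp add: nth_append)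
    next
      case False
      then have ii: "i = length ks" using i by simp
      define N where "N = length (filter (\<lambda>s. s \<noteq> k) ks)"
      define G where "G = (\<lambda>E. if N = 0 then real k * pmf P v
          else (\<Sum>j<length ks. if ks!j \<noteq> k then H P v k (E!j) else 0) / real N)"
      have SG: "measure_pmf.expectation (simplicial_edge P k E) (\<lambda>f. real (count f v)) = G E"
        if E: "E \<in> set_pmf M" for E
      proof -
        have "length (filter (\<lambda>e. size e \<noteq> k) E) = N"
          unfolding N_def sz[OF E, symmetric] by (simp add: filter_map o_def)
        moreover have "\<And>j. j < length ks \<Longrightarrow> size (E!j) = ks!j" using sz[OF E] len[OF E]
          by (metis nth_map)
        ultimately show ?thesis
          using simplicial_edge_exp[OF P, of k E v] len[OF E]
          by (auto simp: G_def intro!: sum.cong)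
      qed
      have "measure_pmf.expectation M (\<lambda>E. measure_pmf.expectation (model_step P q k E) (\<lambda>E'. real (count (E'!i) v)))
         = measure_pmf.expectation M (\<lambda>E. q * G E + (1 - q) * (real k * pmf P v))"
      proof (rule exp_cong)
        fix E assume E: "E \<in> set_pmf M"
        then have "i = length E" using len ii by simp
        then show "measure_pmf.expectation (model_step P q k E) (\<lambda>E'. real (count (E'!i) v))
            = q * G E + (1 - q) * (real k * pmf P v)"
          using model_step_exp_new[OF P q, of k E v] SG[OF E] by simp
      qed
      also have "\<dots> = q * measure_pmf.expectation M G + (1 - q) * (real k * pmf P v)"
        using fM by (simp add: integrable_measure_pmf_finite)
      also have "measure_pmf.expectation M G = real k * pmf P v"
      proof (cases "N = 0")
        case True
        then show ?thesis by (simp add: G_def)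
      next
        case False
        have "measure_pmf.expectation M G
           = (\<Sum>j<length ks. measure_pmf.expectation M (\<lambda>E. if ks!j \<noteq> k then H P v k (E!j) else 0)) / real N"
          using False fM by (simp add: G_def integrable_measure_pmf_finite)
        also have "\<dots> = (\<Sum>j<length ks. if ks!j \<noteq> k then real k * pmf P v else 0) / real N"
        proof -
          have "measure_pmf.expectation M (\<lambda>E. if ks!j \<noteq> k then H P v k (E!j) else 0)
              = (if ks!j \<noteq> k then real k * pmf P v else 0)" if j: "j < length ks" for j
          proof (cases "ks!j \<noteq> k")
            case True
            have "measure_pmf.expectation M (\<lambda>E. H P v k (E!j)) = real k * pmf P v"
            proof (rule H_exp[OF fM _ ex[OF j] True])
              fix E assume "E \<in> set_pmf M"
              then show "size (E!j) = ks!j" using sz len j by (metis nth_map)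
            qed
            then show ?thesis using True by simp
          qed simp
          then show ?thesis by (auto intro!: sum.cong)
        qed
        also have "(\<Sum>j<length ks. if ks!j \<noteq> k then real k * pmf P v else 0) = real N * (real k * pmf P v)"
          by (simp add: sum.If_cases N_def length_filter_conv_card lessThan_def Collect_conj_eq[symmetric])
        finally show ?thesis using False by simp
      qed
      finally show ?thesis using b ii by (simp add: algebra_simps)
    qed
  qed
  show ?thesis unfolding Inv_def using fin sz' exps by blast
qed



lemma Inv_run:
  assumes P: "finite (set_pmf P)" and q: "0 \<le> q" "q \<le> 1"
  shows "Inv P v M ks0 \<Longrightarrow> Inv P v (M \<bind> (\<lambda>E. model_run P q ks E)) (ks0 @ ks)"
proof (induction ks arbitrary: M ks0)
  case Nil
  then show ?case by (simp add: bind_return_pmf')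
next
  case (Cons k ks)
  have "Inv P v (M \<bind> model_step P q k) (ks0 @ [k])" by (rule Inv_step[OF P q Cons.prems])
  from Cons.IH[OF this] show ?case by (simp add: bind_assoc_pmf)
qed

lemma sum_mset_sum: "sum_mset (\<Sum>k\<in>K. f k) = (\<Sum>k\<in>K. sum_mset (f k))"
  by (induction K rule: infinite_finite_induct) auto

theorem mainTheorem2:
  fixes n :: nat and d :: "nat \<Rightarrow> real" and kmin kmax :: nat and m :: "nat \<Rightarrow> nat" and q :: real
  assumes "\<And>u. u \<in> {1..n} \<Longrightarrow> d u \<ge> 0"
    and "(\<Sum>u\<in>{1..n}. d u) > 0"
    and "kmin \<ge> 2"
    and "(\<Sum>k\<in>{kmin..kmax}. real k * real (m k)) = (\<Sum>u\<in>{1..n}. d u)"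
    and "0 \<le> q" and "q \<le> 1"
    and "v \<in> {1..n}"
  shows "measure_pmf.expectation (simplicial_CL n d kmin kmax m q) (\<lambda>E. real (hdeg E v)) = d v"
proof -
  define T where "T = (\<Sum>u\<in>{1..n}. d u)"
  define f where "f = (\<lambda>v. if v \<in> {1..n} then d v / T else 0)"
  define P where "P = vertex_law n d"
  have Tpos: "T > 0" using assms(2) T_def by simp
  have fnn: "\<And>x. 0 \<le> f x" using assms(1) Tpos by (simp add: f_def)
  have "(\<integral>\<^sup>+x. ennreal (f x) \<partial>count_space UNIV) = (\<Sum>x\<in>{1..n}. ennreal (f x))"
    by (rule nn_integral_count_space') (auto simp: f_def)
  also have "\<dots> = ennreal (\<Sum>x\<in>{1..n}. f x)" using fnn by (simp add: sum_ennreal)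
  also have "(\<Sum>x\<in>{1..n}. f x) = (\<Sum>x\<in>{1..n}. d x / T)" by (simp add: f_def)
  also have "\<dots> = 1" using Tpos by (simp add: sum_divide_distrib[symmetric] T_def)
  finally have prob: "(\<integral>\<^sup>+x. ennreal (f x) \<partial>count_space UNIV) = 1" by simp
  have pmfP: "\<And>x. pmf P x = f x"
    unfolding P_def vertex_law_def T_def[symmetric] f_def[symmetric]
    by (rule pmf_embed_pmf[OF fnn prob])
  have finP: "finite (set_pmf P)"
  proof (rule finite_subset[of _ "{1..n}"])
    show "set_pmf P \<subseteq> {1..n}" using pmfP by (auto simp: set_pmf_iff f_def split: if_splits)
  qed simp
  have pv: "pmf P v = d v / T" using pmfP assms(7) by (simp add: f_def)
  define A where "A = size_multiset kmin kmax m"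
  have sumS: "real (sum_list S) = T" if S: "S \<in> permutations_of_multiset A" for S
  proof -
    have "sum_list S = sum_mset (mset S)" by (simp add: sum_mset_sum_list)
    also have "\<dots> = sum_mset A" using permutations_of_multisetD[OF S] by simp
    also have "\<dots> = (\<Sum>k\<in>{kmin..kmax}. m k * k)"
      by (simp add: A_def size_multiset_def sum_mset_sum)
    finally show ?thesis using assms(4) T_def by (simp add: mult.commute)
  qed
  have run: "Inv P v (model_run P q S []) S" for S
  proof -
    have "Inv P v (return_pmf []) []" by (simp add: Inv_def)
    from Inv_run[OF finP assms(5,6) this, of S] show ?thesis by (simp add: bind_return_pmf)
  qed
  have expS: "measure_pmf.expectation (model_run P q S []) (\<lambda>E. real (hdeg E v)) = T * pmf P v"
    if S: "S \<in> permutations_of_multiset A" for S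
  proof -
    have fin: "finite (set_pmf (model_run P q S []))"
      and sz: "\<And>E. E \<in> set_pmf (model_run P q S []) \<Longrightarrow> map size E = S"
      and ex: "\<And>i. i < length S \<Longrightarrow> measure_pmf.expectation (model_run P q S []) (\<lambda>E. real (count (E!i) v)) = real (S!i) * pmf P v"
      using run[of S] unfolding Inv_def by auto
    have "measure_pmf.expectation (model_run P q S []) (\<lambda>E. real (hdeg E v))
        = measure_pmf.expectation (model_run P q S []) (\<lambda>E. \<Sum>i<length S. real (count (E!i) v))"
    proof (rule exp_cong)
      fix E assume "E \<in> set_pmf (model_run P q S [])"
      then have "length E = length S" using sz by (metis length_map)
      then show "real (hdeg E v) = (\<Sum>i<length S. real (count (E!i) v))"
        by (simp add: hdeg_def sum_list_nth' flip: of_nat_sum)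
    qed
    also have "\<dots> = (\<Sum>i<length S. real (S!i) * pmf P v)"
      using fin ex by (simp add: integrable_measure_pmf_finite)
    also have "\<dots> = real (sum_list S) * pmf P v"
    proof -
      have "sum_list S = (\<Sum>i<length S. S!i)" by (simp add: sum_list_sum_nth atLeast0LessThan)
      then show ?thesis by (simp add: sum_distrib_right)
    qed
    finally show ?thesis using sumS[OF S] by simp
  qed
  have "measure_pmf.expectation (simplicial_CL n d kmin kmax m q) (\<lambda>E. real (hdeg E v))
      = (\<Sum>S\<in>permutations_of_multiset A. measure_pmf.expectation (model_run P q S []) (\<lambda>E. real (hdeg E v)) /\<^sub>R real (card (permutations_of_multiset A)))"
    unfolding simplicial_CL_def P_def[symmetric] A_def[symmetric]
  proof (rule pmf_expectation_bind_pmf_of_set)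
    fix S show "finite (set_pmf (model_run P q S []))" using run[of S] by (simp add: Inv_def)
  qed simp_all
  also have "\<dots> = (\<Sum>S\<in>permutations_of_multiset A. (T * pmf P v) / real (card (permutations_of_multiset A)))"
    by (rule sum.cong) (simp_all add: expS divide_inverse mult.commute)
  also have "\<dots> = T * pmf P v"
    by (simp add: card_gt_0_iff)
  also have "\<dots> = d v" using Tpos pv by simp
  finally show ?thesis .
qed


end
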